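(* Let $n\ge5$, $x_1,\dots,x_{n-1}>0$, $\gamma,\delta>0$ with $\gamma\ne1\ne\delta$, $x_0=1$, and let $\mathbf{R}$ be the $n\times n$ matrix with entries $r_{ij}=x_{j-1}/x_{i-1}$ except $r_{12}=\delta x_1$, $r_{21}=1/(\delta x_1)$, $r_{34}=\gamma x_3/x_2$, $r_{43}=x_2/(\gamma x_3)$. Let $\mathbf{w}^{EM}$ be its principal right eigenvector. Then for $i=5,\dots,n$: $\delta>1$ iff $w_1^{EM}/w_i^{EM}>x_{i-1}$, and $\delta<1$ iff $w_1^{EM}/w_i^{EM}<x_{i-1}$.
   Context: The principal right eigenvector is the positive (Perron) eigenvector belonging to the largest eigenvalue. *)

theory Defs
  imports Main "HOL-Analysis.Analysis"
begin

text \<open>Matrices are n x n real matrices indexed by 1..n, as functions nat => nat => real.\<close>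

definition mat_mult_vec :: "nat \<Rightarrow> (nat \<Rightarrow> nat \<Rightarrow> real) \<Rightarrow> (nat \<Rightarrow> real) \<Rightarrow> nat \<Rightarrow> real" where
  "mat_mult_vec n A v i = (\<Sum>j = 1..n. A i j * v j)"

definition is_eigenvalue :: "nat \<Rightarrow> (nat \<Rightarrow> nat \<Rightarrow> real) \<Rightarrow> real \<Rightarrow> bool" where
  "is_eigenvalue n A mu \<longleftrightarrow>
     (\<exists>v. (\<exists>i\<in>{1..n}. v i \<noteq> 0) \<and> (\<forall>i\<in>{1..n}. mat_mult_vec n A v i = mu * v i))"

definition principal_right_eigenvector :: "nat \<Rightarrow> (nat \<Rightarrow> nat \<Rightarrow> real) \<Rightarrow> (nat \<Rightarrow> real) \<Rightarrow> bool" where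
  "principal_right_eigenvector n A w \<longleftrightarrow>
     (\<forall>i\<in>{1..n}. w i > 0) \<and>
     (\<exists>lam. (\<forall>i\<in>{1..n}. mat_mult_vec n A w i = lam * w i) \<and>
            (\<forall>mu. is_eigenvalue n A mu \<longrightarrow> mu \<le> lam))"

definition Rmat :: "(nat \<Rightarrow> real) \<Rightarrow> real \<Rightarrow> real \<Rightarrow> nat \<Rightarrow> nat \<Rightarrow> real" where
  "Rmat x \<gamma> \<delta> i j =
     (if i = 1 \<and> j = 2 then \<delta> * x 1
      else if i = 2 \<and> j = 1 then 1 / (\<delta> * x 1)
      else if i = 3 \<and> j = 4 then \<gamma> * x 3 / x 2
      else if i = 4 \<and> j = 3 then x 2 / (\<gamma> * x 3)
      else x (j - 1) / x (i - 1))"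

end

theory Submission
  imports Defs
begin

theorem mainTheorem17:
  fixes n :: nat and x :: "nat \<Rightarrow> real" and \<gamma> \<delta> :: real and w :: "nat \<Rightarrow> real"
  assumes "n \<ge> 5"
    and "\<forall>k\<in>{1..n-1}. x k > 0"
    and "x 0 = 1"
    and "\<gamma> > 0" and "\<delta> > 0" and "\<gamma> \<noteq> 1" and "\<delta> \<noteq> 1"
    and "principal_right_eigenvector n (Rmat x \<gamma> \<delta>) w"
  shows "\<forall>i\<in>{5..n}. (\<delta> > 1 \<longleftrightarrow> w 1 / w i > x (i - 1)) \<and> (\<delta> < 1 \<longleftrightarrow> w 1 / w i < x (i - 1))"
proof
  fix i assume i: "i \<in> {5..n}"
  from assms(8) obtain lam where wpos: "\<forall>i\<in>{1..n}. w i > 0"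
    and ev: "\<forall>i\<in>{1..n}. mat_mult_vec n (Rmat x \<gamma> \<delta>) w i = lam * w i"
    unfolding principal_right_eigenvector_def by blast
  have xpos: "x (j - 1) > 0" if "j \<in> {1..n}" for j
  proof (cases "j = 1")
    case True then show ?thesis using assms(3) by simp
  next
    case False
    then have "j - 1 \<in> {1..n-1}" using that by auto
    then show ?thesis using assms(2) by blast
  qed
  define T where "T = (\<Sum>j=1..n. x (j - 1) * w j)"
  have Tpos: "T > 0" unfolding T_def
    by (rule sum_pos) (use xpos wpos assms(1) in auto)
  have x1: "x 1 > 0" using assms(2) assms(1) by auto
  have xi: "x (i - 1) > 0" using xpos i by auto
  have wi: "w i > 0" "w 1 > 0" "w 2 > 0" using wpos i assms(1) by auto
  have rowi: "mat_mult_vec n (Rmat x \<gamma> \<delta>) w i = T / x (i - 1)"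
    unfolding mat_mult_vec_def T_def sum_divide_distrib
    by (rule sum.cong) (use i in \<open>auto simp: Rmat_def\<close>)
  have "mat_mult_vec n (Rmat x \<gamma> \<delta>) w 1 =
        (\<Sum>j=1..n. x (j - 1) * w j + (if j = 2 then (\<delta> - 1) * x 1 * w 2 else 0))"
    unfolding mat_mult_vec_def
    by (rule sum.cong) (auto simp: Rmat_def assms(3) algebra_simps)
  also have "\<dots> = T + (\<delta> - 1) * x 1 * w 2"
    unfolding sum.distrib T_def using assms(1) by simp
  finally have row1: "mat_mult_vec n (Rmat x \<gamma> \<delta>) w 1 = T + (\<delta> - 1) * x 1 * w 2" .
  have e1: "lam * w 1 = T + (\<delta> - 1) * x 1 * w 2" using ev row1 assms(1) by force
  have ei: "lam * w i * x (i - 1) = T" using ev rowi i xi by force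
  have lpos: "lam > 0"
  proof -
    have "0 < (w i * x (i - 1)) * lam" using ei Tpos by (simp add: mult.commute mult.left_commute)
    moreover have "0 < w i * x (i - 1)" using wi xi by simp
    ultimately show ?thesis using zero_less_mult_pos by blast
  qed
  have key: "lam * (w 1 - w i * x (i - 1)) = (\<delta> - 1) * (x 1 * w 2)"
    using e1 ei by (simp add: algebra_simps)
  have c1: "w 1 / w i > x (i - 1) \<longleftrightarrow> w 1 - w i * x (i - 1) > 0"
    using wi by (simp add: pos_less_divide_eq mult.commute)
  have c2: "w 1 / w i < x (i - 1) \<longleftrightarrow> w 1 - w i * x (i - 1) < 0"
    using wi by (simp add: pos_divide_less_eq mult.commute)
  have p: "x 1 * w 2 > 0" using x1 wi by simp
  define d where "d = w 1 - w i * x (i - 1)"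
  have s1: "d > 0 \<longleftrightarrow> \<delta> - 1 > 0"
  proof -
    have "d > 0 \<longleftrightarrow> lam * d > 0" using lpos by (simp add: zero_less_mult_iff)
    also have "\<dots> \<longleftrightarrow> (\<delta> - 1) * (x 1 * w 2) > 0" using key d_def by simp
    also have "\<dots> \<longleftrightarrow> \<delta> - 1 > 0" using p by (metis zero_less_mult_iff not_less_iff_gr_or_eq order.asym)
    finally show ?thesis .
  qed
  have s2: "d < 0 \<longleftrightarrow> \<delta> - 1 < 0"
  proof -
    have "d < 0 \<longleftrightarrow> lam * d < 0" using lpos by (simp add: mult_less_0_iff)
    also have "\<dots> \<longleftrightarrow> (\<delta> - 1) * (x 1 * w 2) < 0" using key d_def by simp
    also have "\<dots> \<longleftrightarrow> \<delta> - 1 < 0" using p by (metis mult_less_0_iff not_less_iff_gr_or_eq order.asym)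
    finally show ?thesis .
  qed
  show "(\<delta> > 1 \<longleftrightarrow> w 1 / w i > x (i - 1)) \<and> (\<delta> < 1 \<longleftrightarrow> w 1 / w i < x (i - 1))"
    using c1 c2 s1 s2 d_def by linarith
qed

end
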